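(* Let $s\ge r\ge 2$, let $Q$ be an $s$-vertex $r$-graph and let $\mathcal P$ be a hereditary property of $r$-graphs. Then for every $p>1$, $$\lambda^{(p)}(Q,\mathcal P)=\pi(Q,\mathcal P).$$
   Context: An $r$-graph ($r\ge 2$) is a finite hypergraph all of whose edges have exactly $r$ vertices. For $I\subseteq V(H)$, $H[I]$ denotes the induced subhypergraph on $I$. For an $s$-vertex $r$-graph $Q$ and an $r$-graph $H$, $\mathcal N(Q,H)$ is the number of (not necessarily induced) subgraphs of $H$ isomorphic to $Q$. For an $n$-vertex $r$-graph $H$ with vertex set $[n]$ and $\mathbf x\in\mathbb R^n$, $P_{Q,H}(\mathbf x)=s!\sum_{\{i_1,\dots,i_s\}\in\binom{[n]}{s}}\mathcal N(Q,H[\{i_1,\dots,i_s\}])\,x_{i_1}\cdots x_{i_s}$, and for $p\ge1$, $\lambda^{(p)}(Q,H)=\max_{\|\mathbf x\|_p=1}P_{Q,H}(\mathbf x)$. A hereditary property $\mathcal P$ of $r$-graphs is a family of $r$-graphs closed under isomorphism and under taking induced subgraphs; as a standing assumption, whenever $H\in\mathcal P$, the disjoint union of $H$ with an isolated vertex is also in $\mathcal P$. $\mathcal P_n$ is the set of members of $\mathcal P$ with $n$ vertices. $ex(Q,\mathcal P_n)=\max\{\mathcal N(Q,H):H\in\mathcal P_n\}$ and $\pi(Q,\mathcal P)=\lim_{n\to\infty}ex(Q,\mathcal P_n)/\binom ns$ (this limit exists). $\lambda^{(p)}(Q,\mathcal P_n)=\max\{\lambda^{(p)}(Q,H):H\in\mathcal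 P_n\}$ and $\lambda^{(p)}(Q,\mathcal P)=\lim_{n\to\infty}\lambda^{(p)}(Q,\mathcal P_n)n^{s/p-s}$ (this limit exists). *)

theory Defs
  imports "HOL-Analysis.Analysis"
begin

type_synonym hgraph = "nat set \<times> nat set set"

definition verts :: "hgraph \<Rightarrow> nat set" where "verts H = fst H"
definition edges :: "hgraph \<Rightarrow> nat set set" where "edges H = snd H"

definition rgraph :: "nat \<Rightarrow> hgraph \<Rightarrow> bool" where
  "rgraph r H \<longleftrightarrow> finite (verts H) \<and> (\<forall>e\<in>edges H. e \<subseteq> verts H \<and> card e = r)"

definition iso :: "hgraph \<Rightarrow> hgraph \<Rightarrow> bool" where
  "iso H G \<longleftrightarrow> (\<exists>f. bij_betw f (verts H) (verts G) \<and> edges G = (\<lambda>e. f ` e) ` edges H)"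

definition induced :: "hgraph \<Rightarrow> nat set \<Rightarrow> hgraph" where
  "induced H I = (I, {e \<in> edges H. e \<subseteq> I})"

text \<open>Hereditary property of r-graphs, with the standing assumption
  (closure under adding an isolated vertex).\<close>
definition hereditary :: "nat \<Rightarrow> hgraph set \<Rightarrow> bool" where
  "hereditary r P \<longleftrightarrow>
     (\<forall>H\<in>P. rgraph r H) \<and>
     (\<forall>H G. H \<in> P \<longrightarrow> rgraph r G \<longrightarrow> iso H G \<longrightarrow> G \<in> P) \<and>
     (\<forall>H I. H \<in> P \<longrightarrow> I \<subseteq> verts H \<longrightarrow> induced H I \<in> P) \<and>
     (\<forall>H v. H \<in> P \<longrightarrow> v \<notin> verts H \<longrightarrow> (insert v (verts H), edges H) \<in> P)"

definition numsub :: "hgraph \<Rightarrow> hgraph \<Rightarrow> nat" where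
  "numsub Q H = card {G. verts G \<subseteq> verts H \<and> edges G \<subseteq> edges H \<and>
                        (\<forall>e\<in>edges G. e \<subseteq> verts G) \<and> iso G Q}"

text \<open>The polynomial P_{Q,H}(x); vertex set of H plays the role of [n].\<close>
definition polyQ :: "hgraph \<Rightarrow> hgraph \<Rightarrow> (nat \<Rightarrow> real) \<Rightarrow> real" where
  "polyQ Q H x = fact (card (verts Q)) *
     (\<Sum>I\<in>{I. I \<subseteq> verts H \<and> card I = card (verts Q)}.
        real (numsub Q (induced H I)) * (\<Prod>i\<in>I. x i))"

definition pnorm :: "real \<Rightarrow> nat set \<Rightarrow> (nat \<Rightarrow> real) \<Rightarrow> real" where
  "pnorm p V x = (\<Sum>i\<in>V. \<bar>x i\<bar> powr p) powr (1 / p)"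

definition lam :: "real \<Rightarrow> hgraph \<Rightarrow> hgraph \<Rightarrow> real" where
  "lam p Q H = Sup {polyQ Q H x | x. pnorm p (verts H) x = 1}"

definition Pn :: "hgraph set \<Rightarrow> nat \<Rightarrow> hgraph set" where
  "Pn P n = {H \<in> P. card (verts H) = n}"

definition ex_num :: "hgraph \<Rightarrow> hgraph set \<Rightarrow> nat \<Rightarrow> nat" where
  "ex_num Q P n = Max (numsub Q ` Pn P n)"

definition pi_dens :: "hgraph \<Rightarrow> hgraph set \<Rightarrow> real" where
  "pi_dens Q P = lim (\<lambda>n. real (ex_num Q P n) / real (n choose card (verts Q)))"

definition lam_n :: "real \<Rightarrow> hgraph \<Rightarrow> hgraph set \<Rightarrow> nat \<Rightarrow> real" where
  "lam_n p Q P n = Sup (lam p Q ` Pn P n)"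

definition lam_prop :: "real \<Rightarrow> hgraph \<Rightarrow> hgraph set \<Rightarrow> real" where
  "lam_prop p Q P = lim (\<lambda>n. lam_n p Q P n *
       real n powr (real (card (verts Q)) / p - real (card (verts Q))))"

end

theory Submission
  imports Defs "HOL-Library.FuncSet"
begin


lemma iso_card: "iso G Q \<Longrightarrow> card (verts G) = card (verts Q)"
  unfolding iso_def using bij_betw_same_card by blast

lemma numsub_set_sub:
  "{G. verts G \<subseteq> verts H \<and> edges G \<subseteq> edges H \<and> (\<forall>e\<in>edges G. e \<subseteq> verts G) \<and> iso G Q}
    \<subseteq> Pow (verts H) \<times> Pow (Pow (verts H))"
proof
  fix G assume "G \<in> {G. verts G \<subseteq> verts H \<and> edges G \<subseteq> edges H \<and> (\<forall>e\<in>edges G. e \<subseteq> verts G) \<and> iso G Q}"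
  then have "fst G \<subseteq> verts H" "snd G \<subseteq> Pow (verts H)"
    unfolding verts_def edges_def by auto
  then show "G \<in> Pow (verts H) \<times> Pow (Pow (verts H))"
    by (cases G) auto
qed

lemma numsub_le:
  assumes "finite (verts H)"
  shows "numsub Q H \<le> 2 ^ card (verts H) * 2 ^ (2 ^ card (verts H))"
proof -
  have "numsub Q H \<le> card (Pow (verts H) \<times> Pow (Pow (verts H)))"
    unfolding numsub_def using assms
    by (intro card_mono numsub_set_sub) auto
  also have "\<dots> = 2 ^ card (verts H) * 2 ^ (2 ^ card (verts H))"
    using assms by (simp add: card_cartesian_product card_Pow)
  finally show ?thesis .
qed

lemma verts_induced[simp]: "verts (induced H I) = I"
  and edges_induced[simp]: "edges (induced H I) = {e \<in> edges H. e \<subseteq> I}"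
  by (auto simp: induced_def verts_def edges_def)

lemma numsub_split:
  assumes fin: "finite S" and s: "card (verts Q) = s" and s0: "s > 0"
  shows "numsub Q (induced H S) = (\<Sum>I\<in>{I. I \<subseteq> S \<and> card I = s}. numsub Q (induced H I))"
proof -
  define A where "A = (\<lambda>I. {G. verts G \<subseteq> verts (induced H I) \<and> edges G \<subseteq> edges (induced H I)
      \<and> (\<forall>e\<in>edges G. e \<subseteq> verts G) \<and> iso G Q})"
  have finA: "finite (A I)" if "finite I" for I
    unfolding A_def using that
    by (intro finite_subset[OF numsub_set_sub]) auto
  have eq: "A I = {G \<in> A S. verts G = I}" if I: "I \<in> {I. I \<subseteq> S \<and> card I = s}" for I
  proof
    have fI: "finite I" using I s0 card_ge_0_finite by auto
    show "A I \<subseteq> {G \<in> A S. verts G = I}"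
    proof
      fix G assume G: "G \<in> A I"
      then have "card (verts G) = s" "verts G \<subseteq> I" unfolding A_def using iso_card[of G Q] s by auto
      then have "verts G = I" using I fI by (metis (mono_tags, lifting) card_subset_eq mem_Collect_eq)
      then show "G \<in> {G \<in> A S. verts G = I}" using G I unfolding A_def by auto
    qed
    show "{G \<in> A S. verts G = I} \<subseteq> A I"
      unfolding A_def by auto
  qed
  have U: "A S = (\<Union>I\<in>{I. I \<subseteq> S \<and> card I = s}. {G \<in> A S. verts G = I})"
  proof -
    have "verts G \<in> {I. I \<subseteq> S \<and> card I = s}" if "G \<in> A S" for G
      using that iso_card[of G Q] s unfolding A_def by auto
    then show ?thesis by blast
  qed
  have "numsub Q (induced H S) = card (A S)" unfolding numsub_def A_def by simp
  also have "\<dots> = (\<Sum>I\<in>{I. I \<subseteq> S \<and> card I = s}. card {G \<in> A S. verts G = I})"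
    by (subst U, rule card_UN_disjoint) (use fin finA in auto)
  also have "\<dots> = (\<Sum>I\<in>{I. I \<subseteq> S \<and> card I = s}. numsub Q (induced H I))"
  proof (rule sum.cong[OF refl])
    fix I assume "I \<in> {I. I \<subseteq> S \<and> card I = s}"
    then show "card {G \<in> A S. verts G = I} = numsub Q (induced H I)"
      using eq[of I] unfolding numsub_def A_def by simp
  qed
  finally show ?thesis .
qed



lemma prob_inner:
  fixes q :: "nat \<Rightarrow> real"
  assumes fin: "finite V" and IV: "I \<subseteq> V"
  shows "(\<Sum>S\<in>{S \<in> Pow V. I \<subseteq> S}. (\<Prod>i\<in>S. q i) * (\<Prod>i\<in>V-S. 1 - q i)) = (\<Prod>i\<in>I. q i)"
proof -
  have fI: "finite I" using fin IV finite_subset by blast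
  have "(\<Sum>S\<in>{S \<in> Pow V. I \<subseteq> S}. (\<Prod>i\<in>S. q i) * (\<Prod>i\<in>V-S. 1 - q i))
      = (\<Sum>B\<in>Pow (V - I). (\<Prod>i\<in>I \<union> B. q i) * (\<Prod>i\<in>V-(I \<union> B). 1 - q i))"
    by (rule sum.reindex_bij_witness[of _ "\<lambda>B. I \<union> B" "\<lambda>S. S - I"]) (use IV in \<open>auto simp: Un_absorb1\<close>)
  also have "\<dots> = (\<Sum>B\<in>Pow (V - I). (\<Prod>i\<in>I. q i) * ((\<Prod>i\<in>B. q i) * (\<Prod>i\<in>(V-I)-B. 1 - q i)))"
  proof (rule sum.cong[OF refl])
    fix B assume B: "B \<in> Pow (V - I)"
    then have fB: "finite B" using fin finite_subset by blast
    have "(\<Prod>i\<in>I \<union> B. q i) = (\<Prod>i\<in>I. q i) * (\<Prod>i\<in>B. q i)"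
      using B fI fB by (subst prod.union_disjoint) auto
    moreover have "V - (I \<union> B) = (V - I) - B" by auto
    ultimately show "(\<Prod>i\<in>I \<union> B. q i) * (\<Prod>i\<in>V-(I \<union> B). 1 - q i)
        = (\<Prod>i\<in>I. q i) * ((\<Prod>i\<in>B. q i) * (\<Prod>i\<in>(V-I)-B. 1 - q i))"
      by simp
  qed
  also have "\<dots> = (\<Prod>i\<in>I. q i) * (\<Prod>i\<in>V-I. q i + (1 - q i))"
    using prod_add[of "V - I" q "\<lambda>i. 1 - q i"] fin by (simp add: sum_distrib_left[symmetric])
  also have "\<dots> = (\<Prod>i\<in>I. q i)" by simp
  finally show ?thesis .
qed

lemma prob_ident:
  fixes q :: "nat \<Rightarrow> real" and c :: "nat set \<Rightarrow> real"
  assumes fin: "finite V"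
  shows "(\<Sum>S\<in>Pow V. (\<Prod>i\<in>S. q i) * (\<Prod>i\<in>V-S. 1 - q i) * (\<Sum>I\<in>{I. I \<subseteq> S \<and> card I = s}. c I))
       = (\<Sum>I\<in>{I. I \<subseteq> V \<and> card I = s}. c I * (\<Prod>i\<in>I. q i))"
proof -
  define w where "w S = (\<Prod>i\<in>S. q i) * (\<Prod>i\<in>V-S. 1 - q i)" for S
  have fP: "finite {I. I \<subseteq> V \<and> card I = s}" using fin by simp
  have "(\<Sum>S\<in>Pow V. w S * (\<Sum>I\<in>{I. I \<subseteq> S \<and> card I = s}. c I))
      = (\<Sum>S\<in>Pow V. (\<Sum>I\<in>{I \<in> {I. I \<subseteq> V \<and> card I = s}. I \<subseteq> S}. w S * c I))"
  proof (rule sum.cong[OF refl])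
    fix S assume "S \<in> Pow V"
    then have "{I. I \<subseteq> S \<and> card I = s} = {I \<in> {I. I \<subseteq> V \<and> card I = s}. I \<subseteq> S}" by auto
    then show "w S * (\<Sum>I\<in>{I. I \<subseteq> S \<and> card I = s}. c I) = (\<Sum>I\<in>{I \<in> {I. I \<subseteq> V \<and> card I = s}. I \<subseteq> S}. w S * c I)"
      by (simp add: sum_distrib_left)
  qed
  also have "\<dots> = (\<Sum>I\<in>{I. I \<subseteq> V \<and> card I = s}. (\<Sum>S\<in>{S \<in> Pow V. I \<subseteq> S}. w S * c I))"
    by (rule sum.swap_restrict) (use fin fP in auto)
  also have "\<dots> = (\<Sum>I\<in>{I. I \<subseteq> V \<and> card I = s}. c I * (\<Prod>i\<in>I. q i))"
  proof (rule sum.cong[OF refl])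
    fix I assume "I \<in> {I. I \<subseteq> V \<and> card I = s}"
    then show "(\<Sum>S\<in>{S \<in> Pow V. I \<subseteq> S}. w S * c I) = c I * (\<Prod>i\<in>I. q i)"
      using prob_inner[OF fin, of I q] unfolding w_def
      by (simp add: sum_distrib_right[symmetric])
  qed
  finally show ?thesis unfolding w_def .
qed

lemma all_sum:
  fixes w :: "nat \<Rightarrow> real"
  assumes fin: "finite V"
  shows "(\<Sum>i\<in>V. w i) ^ s = (\<Sum>g\<in>{..<s} \<rightarrow>\<^sub>E V. \<Prod>k<s. w (g k))"
proof -
  have "(\<Prod>k<s. \<Sum>i\<in>V. w i) = (\<Sum>g\<in>PiE {..<s} (\<lambda>_. V). \<Prod>k<s. w (g k))"
    by (rule prod_sum_PiE) (use fin in auto)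
  then show ?thesis by simp
qed

lemma inj_sum:
  fixes w :: "nat \<Rightarrow> real"
  assumes fin: "finite V"
  shows "fact s * (\<Sum>I\<in>{I. I \<subseteq> V \<and> card I = s}. \<Prod>i\<in>I. w i)
     = (\<Sum>g\<in>{g \<in> {..<s} \<rightarrow>\<^sub>E V. inj_on g {..<s}}. \<Prod>k<s. w (g k))"
proof -
  define Inj where "Inj = {g \<in> {..<s} \<rightarrow>\<^sub>E V. inj_on g {..<s}}"
  have fInj: "finite Inj" unfolding Inj_def
    by (rule finite_subset[of _ "{..<s} \<rightarrow>\<^sub>E V"]) (use fin in \<open>auto intro: finite_PiE\<close>)
  have fP: "finite {I. I \<subseteq> V \<and> card I = s}" using fin by simp
  have img: "(\<lambda>g. g ` {..<s}) ` Inj \<subseteq> {I. I \<subseteq> V \<and> card I = s}"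
    unfolding Inj_def by (auto simp: card_image PiE_def)
  have fib: "{g \<in> Inj. g ` {..<s} = I} = {f \<in> {..<s} \<rightarrow>\<^sub>E I. inj_on f {..<s}}"
    if I: "I \<in> {I. I \<subseteq> V \<and> card I = s}" for I
  proof
    show "{g \<in> Inj. g ` {..<s} = I} \<subseteq> {f \<in> {..<s} \<rightarrow>\<^sub>E I. inj_on f {..<s}}"
      unfolding Inj_def by (auto simp: PiE_def)
    show "{f \<in> {..<s} \<rightarrow>\<^sub>E I. inj_on f {..<s}} \<subseteq> {g \<in> Inj. g ` {..<s} = I}"
    proof
      fix f assume f: "f \<in> {f \<in> {..<s} \<rightarrow>\<^sub>E I. inj_on f {..<s}}"
      have fI: "finite I" using I fin finite_subset by blast
      have sub: "f ` {..<s} \<subseteq> I" using f by (auto simp: PiE_def)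
      have "card (f ` {..<s}) = card I" using f I by (simp add: card_image)
      then have "f ` {..<s} = I" using card_subset_eq[OF fI sub] by simp
      then show "f \<in> {g \<in> Inj. g ` {..<s} = I}" using f I unfolding Inj_def by (auto simp: PiE_def)
    qed
  qed
  have cardfib: "card {f \<in> {..<s} \<rightarrow>\<^sub>E I. inj_on f {..<s}} = fact s"
    if I: "I \<in> {I. I \<subseteq> V \<and> card I = s}" for I
  proof -
    have fI: "finite I" using I fin finite_subset by blast
    have "card {f \<in> {..<s} \<rightarrow>\<^sub>E I. inj_on f {..<s}} = card I ^ (card {..<s} - card {..<s}) * prod ((-) (card I)) {0..<card {..<s}}"
      by (rule card_inj_on_subset_funcset) (use fI in auto)
    also have "\<dots> = (\<Prod>i = 0..<s. s - i)" using I by simp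
    also have "\<dots> = fact s" by (simp add: fact_prod_rev)
    finally show ?thesis .
  qed
  have "(\<Sum>g\<in>Inj. \<Prod>k<s. w (g k)) = (\<Sum>I\<in>{I. I \<subseteq> V \<and> card I = s}. \<Sum>g\<in>{g \<in> Inj. g ` {..<s} = I}. \<Prod>k<s. w (g k))"
    using sum.group[OF fInj fP img, of "\<lambda>g. \<Prod>k<s. w (g k)"] by simp
  also have "\<dots> = (\<Sum>I\<in>{I. I \<subseteq> V \<and> card I = s}. fact s * (\<Prod>i\<in>I. w i))"
  proof (rule sum.cong[OF refl])
    fix I assume I: "I \<in> {I. I \<subseteq> V \<and> card I = s}"
    have "(\<Sum>g\<in>{g \<in> Inj. g ` {..<s} = I}. \<Prod>k<s. w (g k)) = (\<Sum>g\<in>{g \<in> Inj. g ` {..<s} = I}. \<Prod>i\<in>I. w i)"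
    proof (rule sum.cong[OF refl])
      fix g assume g: "g \<in> {g \<in> Inj. g ` {..<s} = I}"
      then have "inj_on g {..<s}" unfolding Inj_def by auto
      then have "(\<Prod>i\<in>g ` {..<s}. w i) = (\<Prod>k<s. w (g k))"
        by (simp add: prod.reindex)
      then show "(\<Prod>k<s. w (g k)) = (\<Prod>i\<in>I. w i)" using g by simp
    qed
    also have "\<dots> = fact s * (\<Prod>i\<in>I. w i)"
      using fib[OF I] cardfib[OF I] by simp
    finally show "(\<Sum>g\<in>{g \<in> Inj. g ` {..<s} = I}. \<Prod>k<s. w (g k)) = fact s * (\<Prod>i\<in>I. w i)" .
  qed
  finally show ?thesis unfolding Inj_def by (simp add: sum_distrib_left)
qed

lemma esym_le:
  fixes w :: "nat \<Rightarrow> real"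
  assumes fin: "finite V" and nn: "\<And>i. i \<in> V \<Longrightarrow> 0 \<le> w i"
  shows "fact s * (\<Sum>I\<in>{I. I \<subseteq> V \<and> card I = s}. \<Prod>i\<in>I. w i) \<le> (\<Sum>i\<in>V. w i) ^ s"
  unfolding inj_sum[OF fin] all_sum[OF fin]
proof (rule sum_mono2)
  show "finite ({..<s} \<rightarrow>\<^sub>E V)" using fin by (auto intro: finite_PiE)
  show "{g \<in> {..<s} \<rightarrow>\<^sub>E V. inj_on g {..<s}} \<subseteq> {..<s} \<rightarrow>\<^sub>E V" by auto
  fix g assume "g \<in> ({..<s} \<rightarrow>\<^sub>E V) - {g \<in> {..<s} \<rightarrow>\<^sub>E V. inj_on g {..<s}}"
  then show "0 \<le> (\<Prod>k<s. w (g k))" using nn by (auto intro!: prod_nonneg simp: PiE_def)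
qed

lemma esym_diff:
  fixes x u :: "nat \<Rightarrow> real"
  assumes fin: "finite V" and nn: "\<And>i. i \<in> V \<Longrightarrow> 0 \<le> u i" and le: "\<And>i. i \<in> V \<Longrightarrow> u i \<le> x i"
  shows "fact s * ((\<Sum>I\<in>{I. I \<subseteq> V \<and> card I = s}. \<Prod>i\<in>I. x i) - (\<Sum>I\<in>{I. I \<subseteq> V \<and> card I = s}. \<Prod>i\<in>I. u i))
     \<le> (\<Sum>i\<in>V. x i) ^ s - (\<Sum>i\<in>V. u i) ^ s"
proof -
  have "fact s * ((\<Sum>I\<in>{I. I \<subseteq> V \<and> card I = s}. \<Prod>i\<in>I. x i) - (\<Sum>I\<in>{I. I \<subseteq> V \<and> card I = s}. \<Prod>i\<in>I. u i))
    = (\<Sum>g\<in>{g \<in> {..<s} \<rightarrow>\<^sub>E V. inj_on g {..<s}}. (\<Prod>k<s. x (g k)) - (\<Prod>k<s. u (g k)))"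
    unfolding right_diff_distrib inj_sum[OF fin] by (simp add: sum_subtractf)
  also have "\<dots> \<le> (\<Sum>g\<in>{..<s} \<rightarrow>\<^sub>E V. (\<Prod>k<s. x (g k)) - (\<Prod>k<s. u (g k)))"
  proof (rule sum_mono2)
  show "finite ({..<s} \<rightarrow>\<^sub>E V)" using fin by (auto intro: finite_PiE)
  show "{g \<in> {..<s} \<rightarrow>\<^sub>E V. inj_on g {..<s}} \<subseteq> {..<s} \<rightarrow>\<^sub>E V" by auto
  fix g assume "g \<in> ({..<s} \<rightarrow>\<^sub>E V) - {g \<in> {..<s} \<rightarrow>\<^sub>E V. inj_on g {..<s}}"
  then have "\<And>k. k < s \<Longrightarrow> g k \<in> V" by (auto simp: PiE_def)
  then have "(\<Prod>k<s. u (g k)) \<le> (\<Prod>k<s. x (g k))" using nn le by (auto intro!: prod_mono)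
  then show "0 \<le> (\<Prod>k<s. x (g k)) - (\<Prod>k<s. u (g k))" by simp
  qed
  also have "\<dots> = (\<Sum>i\<in>V. x i) ^ s - (\<Sum>i\<in>V. u i) ^ s"
    unfolding all_sum[OF fin] by (simp add: sum_subtractf)
  finally show ?thesis .
qed

lemma pow_diff_le:
  fixes a b :: real
  assumes "0 \<le> b" "b \<le> a"
  shows "a ^ Suc k - b ^ Suc k \<le> Suc k * a ^ k * (a - b)"
proof (induction k)
  case 0 then show ?case by simp
next
  case (Suc k)
  have "a ^ Suc (Suc k) - b ^ Suc (Suc k) = a * (a ^ Suc k - b ^ Suc k) + (a - b) * b ^ Suc k"
    by (simp add: algebra_simps)
  also have "\<dots> \<le> a * (Suc k * a ^ k * (a - b)) + (a - b) * a ^ Suc k"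
    using Suc assms by (intro add_mono mult_left_mono mult_left_mono power_mono) auto
  also have "\<dots> = Suc (Suc k) * a ^ Suc k * (a - b)" by (simp add: algebra_simps)
  finally show ?case .
qed



lemma young_sum:
  fixes y :: "nat \<Rightarrow> real" and p :: real
  assumes fin: "finite V" and p: "p > 1" and nn: "\<And>i. i \<in> V \<Longrightarrow> 0 \<le> y i"
    and one: "(\<Sum>i\<in>V. y i powr p) = 1" and n0: "card V > 0"
  shows "(\<Sum>i\<in>V. y i) \<le> real (card V) / real (card V) powr (1/p)"
proof -
  define n where "n = real (card V)"
  define m where "m = n powr (1/p)"
  define q where "q = p / (p - 1)"
  have n0': "n > 0" using n0 unfolding n_def by simp
  have m0: "m > 0" unfolding m_def using n0' by simp
  have mp: "m powr p = n" unfolding m_def using n0' p by (simp add: powr_powr)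
  have q1: "q > 1" unfolding q_def using p by (simp add: field_simps)
  have pq: "1/p + 1/q = 1" unfolding q_def using p by (simp add: field_simps)
  have "(\<Sum>i\<in>V. y i * m) \<le> (\<Sum>i\<in>V. (y i * m) powr p / p + 1 powr q / q)"
  proof (rule sum_mono)
    fix i assume "i \<in> V"
    then show "y i * m \<le> (y i * m) powr p / p + 1 powr q / q"
      using Youngs_inequality[of p q "y i * m" 1] p q1 pq nn m0 by simp
  qed
  also have "\<dots> = (\<Sum>i\<in>V. (y i powr p) * (n / p) + 1 / q)"
    by (rule sum.cong[OF refl]) (use nn m0 mp in \<open>simp add: powr_mult\<close>)
  also have "\<dots> = (n / p) * (\<Sum>i\<in>V. y i powr p) + n / q"
    by (simp add: sum.distrib sum_distrib_left mult.commute n_def)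
  also have "\<dots> = n * (1/p + 1/q)" using one by (simp add: field_simps)
  also have "\<dots> = n" using pq by simp
  finally have "(\<Sum>i\<in>V. y i) * m \<le> n" by (simp add: sum_distrib_right)
  then show ?thesis using m0 unfolding m_def n_def by (simp add: field_simps)
qed

lemma tail_sum:
  fixes y :: "nat \<Rightarrow> real" and p c :: real
  assumes p: "p > 1" and c: "c > 0" and nn: "\<And>i. i \<in> V \<Longrightarrow> 0 \<le> y i"
  shows "(\<Sum>i\<in>V. y i - min (y i) c) \<le> c powr (1 - p) * (\<Sum>i\<in>V. y i powr p)"
  unfolding sum_distrib_left
proof (rule sum_mono)
  fix i assume i: "i \<in> V"
  show "y i - min (y i) c \<le> c powr (1 - p) * y i powr p"
  proof (cases "y i \<le> c")
    case True then show ?thesis by simp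
  next
    case False
    then have y0: "y i > 0" using c by simp
    have "c powr (p - 1) \<le> y i powr (p - 1)"
      using False c p by (intro powr_mono2) auto
    then have "c powr (1 - p) * c powr (p - 1) \<le> c powr (1 - p) * y i powr (p - 1)"
      by (intro mult_left_mono) auto
    moreover have "c powr (1 - p) * c powr (p - 1) = 1"
      using c by (simp add: powr_add[symmetric])
    ultimately have "1 \<le> c powr (1 - p) * y i powr (p - 1)" by simp
    then have "y i \<le> y i * (c powr (1 - p) * y i powr (p - 1))"
      using y0 by (simp add: mult_le_cancel_left1)
    also have "\<dots> = c powr (1 - p) * y i powr p"
      using y0 by (simp add: powr_diff field_simps)
    finally have "y i \<le> c powr (1 - p) * y i powr p" .
    moreover have "y i - min (y i) c \<le> y i" using False c by simp
    ultimately show ?thesis by linarith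
  qed
qed



locale setting =
  fixes r s :: nat and Q :: hgraph and P :: "hgraph set"
  assumes r2: "2 \<le> r" and rs: "r \<le> s" and rgQ: "rgraph r Q" and sQ: "card (verts Q) = s"
    and her: "hereditary r P" and Pne: "P \<noteq> {}"
begin

definition K :: nat where "K = 2 ^ s * 2 ^ (2 ^ s)"

lemma s_pos: "s > 0" using r2 rs by simp

lemma rg: "H \<in> P \<Longrightarrow> rgraph r H" using her unfolding hereditary_def by blast

lemma fin_verts: "H \<in> P \<Longrightarrow> finite (verts H)" using rg unfolding rgraph_def by blast

lemma induced_in: "H \<in> P \<Longrightarrow> I \<subseteq> verts H \<Longrightarrow> induced H I \<in> P"
  using her unfolding hereditary_def by blast

lemma induced_self: "H \<in> P \<Longrightarrow> induced H (verts H) = H"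
  using rg[of H] unfolding rgraph_def induced_def verts_def edges_def
  by (cases H) auto

lemma Pn_ne: "Pn P n \<noteq> {}"
proof (induction n)
  case 0
  obtain H where H: "H \<in> P" using Pne by blast
  then have "induced H {} \<in> P" by (intro induced_in) auto
  moreover have "card (verts (induced H {})) = 0" by simp
  ultimately show ?case unfolding Pn_def by blast
next
  case (Suc n)
  then obtain H where H: "H \<in> P" "card (verts H) = n" unfolding Pn_def by blast
  obtain v :: nat where v: "v \<notin> verts H"
    using fin_verts[OF H(1)] ex_new_if_finite infinite_UNIV_nat by blast
  have "(insert v (verts H), edges H) \<in> P" using her H v unfolding hereditary_def by blast
  moreover have "card (verts (insert v (verts H), edges H)) = Suc n"
    using H v fin_verts[OF H(1)] by (simp add: verts_def)
  ultimately show ?case unfolding Pn_def by blast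
qed

lemma fin_img: "finite (numsub Q ` Pn P n)"
proof (rule finite_subset[of _ "{..2 ^ n * 2 ^ (2 ^ n)}"])
  show "numsub Q ` Pn P n \<subseteq> {..2 ^ n * 2 ^ (2 ^ n)}"
    using numsub_le fin_verts unfolding Pn_def by fastforce
qed simp

lemma ex_ge: "H \<in> Pn P n \<Longrightarrow> numsub Q H \<le> ex_num Q P n"
  unfolding ex_num_def using fin_img by (intro Max_ge) auto

lemma ex_att: "\<exists>H\<in>Pn P n. numsub Q H = ex_num Q P n"
proof -
  have "ex_num Q P n \<in> numsub Q ` Pn P n"
    unfolding ex_num_def using fin_img Pn_ne by (intro Max_in) auto
  then show ?thesis by auto
qed

lemma coef_le: "finite I \<Longrightarrow> card I = s \<Longrightarrow> numsub Q (induced H I) \<le> K"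
  using numsub_le[of "induced H I" Q] unfolding K_def by simp

lemma split_self: "H \<in> P \<Longrightarrow> numsub Q H = (\<Sum>I\<in>{I. I \<subseteq> verts H \<and> card I = s}. numsub Q (induced H I))"
  using numsub_split[OF fin_verts sQ s_pos, of H H] induced_self by simp

lemma split_S: "H \<in> P \<Longrightarrow> S \<subseteq> verts H \<Longrightarrow> numsub Q (induced H S) = (\<Sum>I\<in>{I. I \<subseteq> S \<and> card I = s}. numsub Q (induced H I))"
  using numsub_split[OF _ sQ s_pos, of S H] fin_verts finite_subset by blast

lemma ex_le_K: "ex_num Q P n \<le> K * (n choose s)"
proof -
  obtain H where H: "H \<in> Pn P n" "numsub Q H = ex_num Q P n" using ex_att by blast
  have HP: "H \<in> P" and Hn: "card (verts H) = n" using H unfolding Pn_def by auto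
  have "ex_num Q P n = (\<Sum>I\<in>{I. I \<subseteq> verts H \<and> card I = s}. numsub Q (induced H I))"
    using split_self[OF HP] H by simp
  also have "\<dots> \<le> (\<Sum>I\<in>{I. I \<subseteq> verts H \<and> card I = s}. K)"
    by (rule sum_mono, rule coef_le) (use fin_verts[OF HP] finite_subset in auto)
  also have "\<dots> = K * (n choose s)"
    using n_subsets[OF fin_verts[OF HP], of s] Hn by simp
  finally show ?thesis .
qed

lemma ex_mono: assumes n: "n > s" shows "ex_num Q P n * (n - s) \<le> n * ex_num Q P (n - 1)"
proof -
  obtain H where H: "H \<in> Pn P n" "numsub Q H = ex_num Q P n" using ex_att by blast
  have HP: "H \<in> P" and Hn: "card (verts H) = n" using H unfolding Pn_def by auto
  define V where "V = verts H"
  have fV: "finite V" using fin_verts[OF HP] V_def by simp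
  define c where "c I = numsub Q (induced H I)" for I
  have fP: "finite {I. I \<subseteq> V \<and> card I = s}" using fV by simp
  have "ex_num Q P n * (n - s) = (\<Sum>I\<in>{I. I \<subseteq> V \<and> card I = s}. c I * card {v \<in> V. v \<notin> I})"
  proof -
    have "ex_num Q P n * (n - s) = (\<Sum>I\<in>{I. I \<subseteq> V \<and> card I = s}. c I * (n - s))"
      using split_self[OF HP] H unfolding V_def c_def by (simp add: sum_distrib_right)
    also have "\<dots> = (\<Sum>I\<in>{I. I \<subseteq> V \<and> card I = s}. c I * card {v \<in> V. v \<notin> I})"
    proof (rule sum.cong[OF refl])
      fix I assume I: "I \<in> {I. I \<subseteq> V \<and> card I = s}"
      have "{v \<in> V. v \<notin> I} = V - I" by auto
      then have "card {v \<in> V. v \<notin> I} = n - s"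
        using I fV Hn V_def card_Diff_subset[of I V] finite_subset[of I V] by simp
      then show "c I * (n - s) = c I * card {v \<in> V. v \<notin> I}" by simp
    qed
    finally show ?thesis .
  qed
  also have "\<dots> = (\<Sum>I\<in>{I. I \<subseteq> V \<and> card I = s}. \<Sum>v\<in>{v \<in> V. v \<notin> I}. c I)" by (simp add: mult.commute)
  also have "\<dots> = (\<Sum>v\<in>V. \<Sum>I\<in>{I \<in> {I. I \<subseteq> V \<and> card I = s}. v \<notin> I}. c I)"
    by (rule sum.swap_restrict[symmetric]) (use fV fP in auto)
  also have "\<dots> = (\<Sum>v\<in>V. numsub Q (induced H (V - {v})))"
  proof (rule sum.cong[OF refl])
    fix v assume "v \<in> V"
    have "{I \<in> {I. I \<subseteq> V \<and> card I = s}. v \<notin> I} = {I. I \<subseteq> V - {v} \<and> card I = s}" by auto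
    then show "(\<Sum>I\<in>{I \<in> {I. I \<subseteq> V \<and> card I = s}. v \<notin> I}. c I) = numsub Q (induced H (V - {v}))"
      using split_S[OF HP, of "V - {v}"] unfolding c_def V_def by auto
  qed
  also have "\<dots> \<le> (\<Sum>v\<in>V. ex_num Q P (n - 1))"
  proof (rule sum_mono)
    fix v assume v: "v \<in> V"
    have "induced H (V - {v}) \<in> Pn P (n - 1)"
      unfolding Pn_def using induced_in[OF HP, of "V - {v}"] v fV Hn V_def by auto
    then show "numsub Q (induced H (V - {v})) \<le> ex_num Q P (n - 1)" by (rule ex_ge)
  qed
  also have "\<dots> = n * ex_num Q P (n - 1)" using Hn V_def by simp
  finally show ?thesis .
qed

end


context setting
begin

lemma upper:
  fixes p \<beta> C0 T :: real and H :: hgraph and x :: "nat \<Rightarrow> real"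
  assumes p: "p > 1" and \<beta>: "\<beta> \<ge> 0" and T: "T > 0"
    and exb: "\<And>k. real (ex_num Q P k) \<le> \<beta> * real (k choose s) + C0"
    and HP: "H \<in> P" and n0: "card (verts H) > 0"
    and xn: "pnorm p (verts H) x = 1"
  shows "polyQ Q H x \<le> (\<beta> + real K * s * T powr (1 - p)) * (real (card (verts H)) / real (card (verts H)) powr (1/p)) ^ s
           + fact s * C0 * (T / real (card (verts H)) powr (1/p)) ^ s"
proof -
  define V where "V = verts H"
  define n where "n = real (card V)"
  define m where "m = n powr (1/p)"
  define y where "y i = \<bar>x i\<bar>" for i
  define c where "c = T / m"
  define u where "u i = min (y i) c" for i
  define q where "q i = u i / c" for i
  define cf where "cf I = real (numsub Q (induced H I))" for I
  define SV where "SV = {I. I \<subseteq> V \<and> card I = s}"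
  define w where "w S = (\<Prod>i\<in>S. q i) * (\<Prod>i\<in>V-S. 1 - q i)" for S
  define \<tau> where "\<tau> = T powr (1 - p)"
  have fV: "finite V" using fin_verts[OF HP] V_def by simp
  have fSV: "finite SV" using fV SV_def by simp
  have n0': "n > 0" using n0 V_def n_def by simp
  have m0: "m > 0" unfolding m_def using n0' by simp
  have mp: "m powr p = n" unfolding m_def using n0' p by (simp add: powr_powr)
  have c0: "c > 0" using T m0 c_def by simp
  have y0: "\<And>i. 0 \<le> y i" unfolding y_def by simp
  have u0: "\<And>i. 0 \<le> u i" unfolding u_def using y0 c0 by simp
  have uy: "\<And>i. u i \<le> y i" unfolding u_def by simp
  have q01: "\<And>i. 0 \<le> q i \<and> q i \<le> 1" unfolding q_def u_def using y0 c0 by auto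
  have sfin: "\<And>I. I \<in> SV \<Longrightarrow> finite I" unfolding SV_def using fV finite_subset by blast
  have hy: "(\<Sum>i\<in>V. y i powr p) = 1"
  proof -
    define S where "S = (\<Sum>i\<in>V. y i powr p)"
    have S0: "S \<ge> 0" unfolding S_def by (intro sum_nonneg) simp
    have "S powr (1/p) = 1" using xn unfolding pnorm_def S_def y_def V_def by simp
    then have "(S powr (1/p)) powr p = 1" by simp
    then show ?thesis using S0 p unfolding S_def[symmetric] by (simp add: powr_powr)
  qed
  have poly_le: "polyQ Q H x \<le> fact s * (\<Sum>I\<in>SV. cf I * (\<Prod>i\<in>I. y i))"
    unfolding polyQ_def sQ SV_def V_def cf_def
  proof (rule mult_left_mono[OF sum_mono])
    fix I
    have "prod x I \<le> \<bar>prod x I\<bar>" by simp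
    also have "\<dots> = (\<Prod>i\<in>I. y i)" unfolding y_def by (simp add: abs_prod)
    finally show "real (numsub Q (induced H I)) * prod x I \<le> real (numsub Q (induced H I)) * (\<Prod>i\<in>I. y i)"
      by (intro mult_left_mono) auto
  qed simp
  have sy: "(\<Sum>i\<in>V. y i) \<le> n / m"
    using young_sum[OF fV p, of y] y0 hy n0 unfolding n_def m_def V_def by simp
  have su: "(\<Sum>i\<in>V. u i) \<le> (\<Sum>i\<in>V. y i)" by (intro sum_mono uy)
  have su0: "0 \<le> (\<Sum>i\<in>V. u i)" by (intro sum_nonneg u0)
  have sv: "(\<Sum>i\<in>V. y i) - (\<Sum>i\<in>V. u i) \<le> \<tau> * n / m"
  proof -
    have "(\<Sum>i\<in>V. y i) - (\<Sum>i\<in>V. u i) = (\<Sum>i\<in>V. y i - min (y i) c)"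
      unfolding u_def by (simp add: sum_subtractf)
    also have "\<dots> \<le> c powr (1 - p) * (\<Sum>i\<in>V. y i powr p)"
      by (rule tail_sum[OF p c0]) (simp add: y0)
    also have "\<dots> = c powr (1 - p)" using hy by simp
    also have "\<dots> = \<tau> * n / m"
    proof -
      have "m powr (1 - p) = m / n" using m0 mp by (simp add: powr_diff)
      then show ?thesis unfolding c_def \<tau>_def using T m0 n0' by (simp add: powr_divide)
    qed
    finally show ?thesis .
  qed
  have prod_u: "(\<Prod>i\<in>I. u i) = c ^ s * (\<Prod>i\<in>I. q i)" if "I \<in> SV" for I
  proof -
    have "(\<Prod>i\<in>I. u i) = (\<Prod>i\<in>I. c * q i)" unfolding q_def using c0 by simp
    also have "\<dots> = c ^ card I * (\<Prod>i\<in>I. q i)" by (simp add: prod.distrib)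
    finally show ?thesis using that SV_def by simp
  qed
  have w0: "\<And>S. S \<subseteq> V \<Longrightarrow> 0 \<le> w S" unfolding w_def using q01
    by (intro mult_nonneg_nonneg prod_nonneg) auto
  have wsum: "(\<Sum>S\<in>Pow V. w S) = 1"
    using prod_add[OF fV, of q "\<lambda>i. 1 - q i"] unfolding w_def by simp
  have w1: "(\<Sum>S\<in>Pow V. w S * real (card S choose s)) = (\<Sum>I\<in>SV. \<Prod>i\<in>I. q i)"
  proof -
    have "(\<Sum>S\<in>Pow V. w S * real (card S choose s)) = (\<Sum>S\<in>Pow V. w S * (\<Sum>I\<in>{I. I \<subseteq> S \<and> card I = s}. 1))"
    proof (rule sum.cong[OF refl])
      fix S assume "S \<in> Pow V"
      then have "finite S" using fV finite_subset by blast
      then show "w S * real (card S choose s) = w S * (\<Sum>I\<in>{I. I \<subseteq> S \<and> card I = s}. 1)"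
        using n_subsets[of S s] by simp
    qed
    also have "\<dots> = (\<Sum>I\<in>SV. 1 * (\<Prod>i\<in>I. q i))"
      using prob_ident[OF fV, where q=q and s=s and c="\<lambda>_. 1"] unfolding w_def SV_def by simp
    finally show ?thesis by simp
  qed
  have partB0: "(\<Sum>I\<in>SV. cf I * (\<Prod>i\<in>I. u i)) \<le> \<beta> * (\<Sum>I\<in>SV. \<Prod>i\<in>I. u i) + c ^ s * C0"
  proof -
    have "(\<Sum>I\<in>SV. cf I * (\<Prod>i\<in>I. u i)) = c ^ s * (\<Sum>I\<in>SV. cf I * (\<Prod>i\<in>I. q i))"
      by (simp add: prod_u sum_distrib_left mult.left_commute)
    also have "(\<Sum>I\<in>SV. cf I * (\<Prod>i\<in>I. q i)) = (\<Sum>S\<in>Pow V. w S * (\<Sum>I\<in>{I. I \<subseteq> S \<and> card I = s}. cf I))"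
      using prob_ident[OF fV, where q=q and s=s and c=cf] unfolding w_def SV_def by simp
    also have "\<dots> = (\<Sum>S\<in>Pow V. w S * real (numsub Q (induced H S)))"
    proof (rule sum.cong[OF refl])
      fix S assume "S \<in> Pow V"
      then show "w S * (\<Sum>I\<in>{I. I \<subseteq> S \<and> card I = s}. cf I) = w S * real (numsub Q (induced H S))"
        using split_S[OF HP, of S] unfolding cf_def V_def by simp
    qed
    also have "\<dots> \<le> (\<Sum>S\<in>Pow V. w S * (\<beta> * real (card S choose s) + C0))"
    proof (rule sum_mono)
      fix S assume S: "S \<in> Pow V"
      have "induced H S \<in> Pn P (card S)" unfolding Pn_def using induced_in[OF HP, of S] S V_def by simp
      then have "real (numsub Q (induced H S)) \<le> real (ex_num Q P (card S))" using ex_ge by simp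
      also have "\<dots> \<le> \<beta> * real (card S choose s) + C0" by (rule exb)
      finally show "w S * real (numsub Q (induced H S)) \<le> w S * (\<beta> * real (card S choose s) + C0)"
        using w0 S by (intro mult_left_mono) auto
    qed
    also have "\<dots> = \<beta> * (\<Sum>S\<in>Pow V. w S * real (card S choose s)) + C0 * (\<Sum>S\<in>Pow V. w S)"
      by (simp add: algebra_simps sum.distrib sum_distrib_left)
    also have "\<dots> = \<beta> * (\<Sum>I\<in>SV. \<Prod>i\<in>I. q i) + C0" using w1 wsum by simp
    finally have "(\<Sum>I\<in>SV. cf I * (\<Prod>i\<in>I. u i)) \<le> c ^ s * (\<beta> * (\<Sum>I\<in>SV. \<Prod>i\<in>I. q i) + C0)"
      using c0 by (simp add: mult_left_mono)
    also have "\<dots> = \<beta> * (\<Sum>I\<in>SV. \<Prod>i\<in>I. u i) + c ^ s * C0"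
      by (simp add: prod_u sum_distrib_left algebra_simps)
    finally show ?thesis .
  qed
  have partB: "fact s * (\<Sum>I\<in>SV. cf I * (\<Prod>i\<in>I. u i)) \<le> \<beta> * (\<Sum>i\<in>V. u i) ^ s + fact s * c ^ s * C0"
  proof -
    have "fact s * (\<Sum>I\<in>SV. cf I * (\<Prod>i\<in>I. u i)) \<le> fact s * (\<beta> * (\<Sum>I\<in>SV. \<Prod>i\<in>I. u i) + c ^ s * C0)"
      using partB0 by (intro mult_left_mono) auto
    also have "\<dots> = \<beta> * (fact s * (\<Sum>I\<in>SV. \<Prod>i\<in>I. u i)) + fact s * c ^ s * C0"
      by (simp add: algebra_simps)
    also have "\<dots> \<le> \<beta> * (\<Sum>i\<in>V. u i) ^ s + fact s * c ^ s * C0"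
      using esym_le[OF fV, where w=u and s=s] u0 \<beta> c0 unfolding SV_def by (intro add_mono mult_left_mono) auto
    finally show ?thesis .
  qed
  have partA: "fact s * (\<Sum>I\<in>SV. cf I * (\<Prod>i\<in>I. y i)) - fact s * (\<Sum>I\<in>SV. cf I * (\<Prod>i\<in>I. u i))
      \<le> real K * ((\<Sum>i\<in>V. y i) ^ s - (\<Sum>i\<in>V. u i) ^ s)"
  proof -
    have "fact s * (\<Sum>I\<in>SV. cf I * (\<Prod>i\<in>I. y i)) - fact s * (\<Sum>I\<in>SV. cf I * (\<Prod>i\<in>I. u i))
        = fact s * (\<Sum>I\<in>SV. cf I * ((\<Prod>i\<in>I. y i) - (\<Prod>i\<in>I. u i)))"
      by (simp add: algebra_simps sum_subtractf)
    also have "\<dots> \<le> fact s * (\<Sum>I\<in>SV. real K * ((\<Prod>i\<in>I. y i) - (\<Prod>i\<in>I. u i)))"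
    proof (intro mult_left_mono sum_mono)
      fix I assume I: "I \<in> SV"
      have "(\<Prod>i\<in>I. u i) \<le> (\<Prod>i\<in>I. y i)" using u0 uy by (intro prod_mono) auto
      moreover have "cf I \<le> real K" unfolding cf_def using coef_le[OF sfin[OF I], of H] I SV_def by simp
      ultimately show "cf I * ((\<Prod>i\<in>I. y i) - (\<Prod>i\<in>I. u i)) \<le> real K * ((\<Prod>i\<in>I. y i) - (\<Prod>i\<in>I. u i))"
        by (intro mult_right_mono) auto
    qed simp
    also have "\<dots> = real K * (fact s * ((\<Sum>I\<in>SV. \<Prod>i\<in>I. y i) - (\<Sum>I\<in>SV. \<Prod>i\<in>I. u i)))"
      by (simp add: algebra_simps sum_subtractf sum_distrib_left)
    also have "\<dots> \<le> real K * ((\<Sum>i\<in>V. y i) ^ s - (\<Sum>i\<in>V. u i) ^ s)"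
      using esym_diff[OF fV, where u=u and x=y and s=s] u0 uy unfolding SV_def by (intro mult_left_mono) auto
    finally show ?thesis .
  qed
  obtain s' where s': "s = Suc s'" using s_pos by (cases s) auto
  have pd: "(\<Sum>i\<in>V. y i) ^ s - (\<Sum>i\<in>V. u i) ^ s \<le> s * (n / m) ^ s' * (\<tau> * n / m)"
  proof -
    have "(\<Sum>i\<in>V. y i) ^ s - (\<Sum>i\<in>V. u i) ^ s \<le> Suc s' * (\<Sum>i\<in>V. y i) ^ s' * ((\<Sum>i\<in>V. y i) - (\<Sum>i\<in>V. u i))"
      unfolding s' by (rule pow_diff_le[OF su0 su])
    also have "\<dots> \<le> Suc s' * (n / m) ^ s' * (\<tau> * n / m)"
    proof (intro mult_mono mult_left_mono power_mono sy sv)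
      show "0 \<le> (\<Sum>i\<in>V. y i)" by (intro sum_nonneg y0)
      show "0 \<le> (\<Sum>i\<in>V. y i) - (\<Sum>i\<in>V. u i)" using su by simp
      show "0 \<le> real (Suc s') * (n / m) ^ s'" using n0' m0 by simp
      show "0 \<le> (\<Sum>i\<in>V. y i) ^ s'" by (intro zero_le_power sum_nonneg y0)
    qed simp_all
    finally show ?thesis using s' by simp
  qed
  have "polyQ Q H x \<le> fact s * (\<Sum>I\<in>SV. cf I * (\<Prod>i\<in>I. y i))" by (rule poly_le)
  also have "\<dots> \<le> \<beta> * (\<Sum>i\<in>V. u i) ^ s + fact s * c ^ s * C0 + real K * ((\<Sum>i\<in>V. y i) ^ s - (\<Sum>i\<in>V. u i) ^ s)"
    using partA partB by linarith
  also have "\<dots> \<le> \<beta> * (n / m) ^ s + fact s * c ^ s * C0 + real K * (s * (n / m) ^ s' * (\<tau> * n / m))"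
  proof (intro add_mono mult_left_mono order.refl pd)
    show "(\<Sum>i\<in>V. u i) ^ s \<le> (n / m) ^ s" using su0 su sy by (intro power_mono) auto
  qed (use \<beta> c0 in auto)
  also have "\<dots> = (\<beta> + real K * s * \<tau>) * (n / m) ^ s + fact s * C0 * (T / m) ^ s"
    unfolding s' c_def by (simp add: algebra_simps add_divide_distrib)
  finally show ?thesis unfolding n_def m_def \<tau>_def V_def .
qed

end


lemma ratio_lim:
  fixes s :: nat
  shows "(\<lambda>n. fact s * real (n choose s) / real n ^ s) \<longlonglongrightarrow> 1"
proof -
  have eq: "fact s * real (n choose s) / real n ^ s = (\<Prod>i=0..<s. 1 - real i / real n)" if n: "n > 0" for n
  proof -
    have "fact s * real (n choose s) = (\<Prod>i=0..<s. real n - real i)"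
      by (simp add: binomial_gbinomial gbinomial_prod_rev)
    moreover have "(\<Prod>i=0..<s. 1 - real i / real n) = (\<Prod>i=0..<s. (real n - real i) / real n)"
      using n by (intro prod.cong) (auto simp: field_simps)
    moreover have "(\<Prod>i=0..<s. (real n - real i) / real n) = (\<Prod>i=0..<s. real n - real i) / real n ^ s"
      by (simp add: prod_dividef)
    ultimately show ?thesis by simp
  qed
  have "(\<lambda>n. \<Prod>i=0..<s. 1 - real i / real n) \<longlonglongrightarrow> (\<Prod>i=0..<s. 1 - 0)"
    by (intro tendsto_prod tendsto_diff tendsto_const lim_const_over_n)
  then have "(\<lambda>n. \<Prod>i=0..<s. 1 - real i / real n) \<longlonglongrightarrow> 1" by simp
  moreover have "eventually (\<lambda>n. (\<Prod>i=0..<s. 1 - real i / real n) = fact s * real (n choose s) / real n ^ s) sequentially"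
    using eventually_gt_at_top[of "0::nat"] by (rule eventually_mono) (simp add: eq)
  ultimately show ?thesis by (rule Lim_transform_eventually)
qed

context setting
begin

definition a :: "nat \<Rightarrow> real" where "a n = real (ex_num Q P n) / real (n choose s)"

lemma a_nonneg: "a n \<ge> 0" unfolding a_def by simp

lemma a_dec: assumes n: "n > s" shows "a n \<le> a (n - 1)"
proof -
  have C: "real (n choose s) > 0" using n by simp
  have C': "real ((n - 1) choose s) > 0" using n by simp
  have abs: "real (n - s) * real (n choose s) = real n * real ((n - 1) choose s)"
    using binomial_absorb_comp[of n s] by (metis of_nat_mult)
  have m: "real (ex_num Q P n) * real (n - s) \<le> real n * real (ex_num Q P (n - 1))"
    using ex_mono[OF n] by (metis of_nat_le_iff of_nat_mult)
  have "real (ex_num Q P n) * real ((n - 1) choose s) * real n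
      = real (ex_num Q P n) * real (n - s) * real (n choose s)" using abs by (simp add: algebra_simps)
  also have "\<dots> \<le> real n * real (ex_num Q P (n - 1)) * real (n choose s)"
    using m C by (intro mult_right_mono) auto
  finally have "real (ex_num Q P n) * real ((n - 1) choose s) \<le> real (ex_num Q P (n - 1)) * real (n choose s)"
    using n by (simp add: algebra_simps)
  then show ?thesis unfolding a_def using C C' by (simp add: divide_simps)
qed

lemma a_conv: "convergent a"
proof -
  define b where "b k = a (k + Suc s)" for k
  have dec: "decseq b" unfolding b_def
    by (rule decseq_SucI) (use a_dec[of "Suc _ + Suc s"] in simp)
  have "Bseq b"
  proof (rule BseqI')
    fix n show "norm (b n) \<le> b 0"
      using a_nonneg decseqD[OF dec, of 0 n] unfolding b_def by simp
  qed
  then have "convergent b" using Bseq_monoseq_convergent decseq_imp_monoseq[OF dec] by blast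
  then show ?thesis unfolding b_def using convergent_ignore_initial_segment by blast
qed

end


context setting
begin

lemma unif:
  assumes p: "p > 1" and HP: "H \<in> P" and n0: "card (verts H) > 0"
  defines "m \<equiv> real (card (verts H)) powr (1/p)"
  shows "pnorm p (verts H) (\<lambda>i. 1 / m) = 1"
    and "polyQ Q H (\<lambda>i. 1 / m) = fact s * real (numsub Q H) * (1 / m) ^ s"
proof -
  define n where "n = real (card (verts H))"
  have n0': "n > 0" using n0 n_def by simp
  have m0: "m > 0" unfolding m_def using n0 by simp
  have mp: "m powr p = n" unfolding m_def n_def using n0 p by (simp add: powr_powr)
  have "(\<Sum>i\<in>verts H. \<bar>1 / m\<bar> powr p) = n * (1 / n)"
    using m0 mp by (simp add: powr_divide n_def)
  also have "\<dots> = 1" using n0' by simp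
  finally show "pnorm p (verts H) (\<lambda>i. 1 / m) = 1" unfolding pnorm_def by simp
  have "polyQ Q H (\<lambda>i. 1 / m) = fact s * (\<Sum>I\<in>{I. I \<subseteq> verts H \<and> card I = s}. real (numsub Q (induced H I)) * (1 / m) ^ s)"
    unfolding polyQ_def sQ by (intro arg_cong2[where f="(*)"] sum.cong) auto
  also have "\<dots> = fact s * real (numsub Q H) * (1 / m) ^ s"
    using split_self[OF HP] by (simp add: sum_distrib_right)
  finally show "polyQ Q H (\<lambda>i. 1 / m) = fact s * real (numsub Q H) * (1 / m) ^ s" .
qed

lemma lam_upper:
  fixes p \<beta> C0 T :: real
  assumes p: "p > 1" and \<beta>: "\<beta> \<ge> 0" and T: "T > 0"
    and exb: "\<And>k. real (ex_num Q P k) \<le> \<beta> * real (k choose s) + C0"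
    and n0: "n > 0"
  shows "lam_n p Q P n \<le> (\<beta> + real K * s * T powr (1 - p)) * (real n / real n powr (1/p)) ^ s
           + fact s * C0 * (T / real n powr (1/p)) ^ s"
    and "\<And>H. H \<in> Pn P n \<Longrightarrow> lam p Q H \<le> (\<beta> + real K * s * T powr (1 - p)) * (real n / real n powr (1/p)) ^ s
           + fact s * C0 * (T / real n powr (1/p)) ^ s"
    and "\<And>H. H \<in> Pn P n \<Longrightarrow> bdd_above {polyQ Q H x |x. pnorm p (verts H) x = 1}"
    and "bdd_above (lam p Q ` Pn P n)"
proof -
  define B where "B = (\<beta> + real K * s * T powr (1 - p)) * (real n / real n powr (1/p)) ^ s
           + fact s * C0 * (T / real n powr (1/p)) ^ s"
  have X: "\<forall>z\<in>{polyQ Q H x |x. pnorm p (verts H) x = 1}. z \<le> B"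
    "{polyQ Q H x |x. pnorm p (verts H) x = 1} \<noteq> {}" if H: "H \<in> Pn P n" for H
  proof -
    have HP: "H \<in> P" and Hn: "card (verts H) = n" using H unfolding Pn_def by auto
    show "\<forall>z\<in>{polyQ Q H x |x. pnorm p (verts H) x = 1}. z \<le> B"
      using upper[OF p \<beta> T exb HP] Hn n0 unfolding B_def by auto
    show "{polyQ Q H x |x. pnorm p (verts H) x = 1} \<noteq> {}"
      using unif(1)[OF p HP] Hn n0 by auto
  qed
  have L: "lam p Q H \<le> B" if H: "H \<in> Pn P n" for H
    unfolding lam_def using X[OF H] by (intro cSup_least) auto
  then show "\<And>H. H \<in> Pn P n \<Longrightarrow> lam p Q H \<le> (\<beta> + real K * s * T powr (1 - p)) * (real n / real n powr (1/p)) ^ s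
           + fact s * C0 * (T / real n powr (1/p)) ^ s" unfolding B_def by blast
  show "lam_n p Q P n \<le> (\<beta> + real K * s * T powr (1 - p)) * (real n / real n powr (1/p)) ^ s
           + fact s * C0 * (T / real n powr (1/p)) ^ s"
    unfolding lam_n_def B_def[symmetric] using L Pn_ne by (intro cSup_least) auto
  show "\<And>H. H \<in> Pn P n \<Longrightarrow> bdd_above {polyQ Q H x |x. pnorm p (verts H) x = 1}"
    using X unfolding bdd_above_def by blast
  show "bdd_above (lam p Q ` Pn P n)"
    using L unfolding bdd_above_def by blast
qed

lemma lam_lower:
  assumes p: "p > 1" and n0: "n > 0"
  shows "fact s * real (ex_num Q P n) * (1 / real n powr (1/p)) ^ s \<le> lam_n p Q P n"
proof -
  obtain H where H: "H \<in> Pn P n" "numsub Q H = ex_num Q P n" using ex_att by blast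
  have HP: "H \<in> P" and Hn: "card (verts H) = n" using H unfolding Pn_def by auto
  have exb: "\<And>k. real (ex_num Q P k) \<le> real K * real (k choose s) + 0"
    using ex_le_K by (metis add_0_right of_nat_le_iff of_nat_mult)
  note U = lam_upper[OF p of_nat_0_le_iff zero_less_one exb n0]
  have "fact s * real (ex_num Q P n) * (1 / real n powr (1/p)) ^ s = polyQ Q H (\<lambda>i. 1 / real n powr (1/p))"
    using unif(2)[OF p HP] Hn H n0 by simp
  also have "\<dots> \<le> lam p Q H"
    unfolding lam_def using unif(1)[OF p HP] Hn n0 U(3)[OF H(1)] by (intro cSup_upper) auto
  also have "\<dots> \<le> lam_n p Q P n"
    unfolding lam_n_def using U(4) H by (intro cSup_upper) auto
  finally show ?thesis .
qed

end


context setting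
begin

lemma npow: "n > 0 \<Longrightarrow> real n powr (real s / p - real s) = (real n powr (1/p)) ^ s / real n ^ s"
proof -
  assume n: "n > 0"
  have "real n powr (real s / p - real s) = real n powr (real s / p) / real n powr real s"
    by (simp add: powr_diff)
  also have "real n powr (real s / p) = (real n powr (1/p)) powr real s"
    by (simp add: powr_powr)
  also have "\<dots> = (real n powr (1/p)) ^ s" using n by (simp add: powr_realpow)
  also have "real n powr real s = real n ^ s" using n by (simp add: powr_realpow)
  finally show ?thesis .
qed

lemma main:
  assumes p: "p > 1"
  shows "lam_prop p Q P = pi_dens Q P"
proof -
  obtain L where aL: "a \<longlonglongrightarrow> L" using a_conv convergent_def by blast
  have pd: "pi_dens Q P = L" unfolding pi_dens_def sQ using aL unfolding a_def by (rule limI)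
  have L0: "L \<ge> 0" using aL a_nonneg by (intro LIMSEQ_le_const) auto
  define l where "l n = fact s * real (ex_num Q P n) / real n ^ s" for n
  define b where "b n = lam_n p Q P n * real n powr (real s / p - real s)" for n
  have lL: "l \<longlonglongrightarrow> L"
  proof -
    have "(\<lambda>n. a n * (fact s * real (n choose s) / real n ^ s)) \<longlonglongrightarrow> L * 1"
      by (intro tendsto_mult aL ratio_lim)
    moreover have "eventually (\<lambda>n. a n * (fact s * real (n choose s) / real n ^ s) = l n) sequentially"
      using eventually_ge_at_top[of s]
    proof (rule eventually_mono)
      fix n assume "s \<le> n"
      then have "real (n choose s) > 0" by simp
      then show "a n * (fact s * real (n choose s) / real n ^ s) = l n"
        unfolding a_def l_def by (simp add: field_simps)
    qed
    ultimately show ?thesis by (simp add: Lim_transform_eventually)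
  qed
  have lb: "l n \<le> b n" if n: "n > 0" for n
  proof -
    define m where "m = real n powr (1/p)"
    have m0: "m > 0" using n m_def by simp
    have "l n = fact s * real (ex_num Q P n) * (1 / m) ^ s * (m ^ s / real n ^ s)"
      unfolding l_def using m0 by (simp add: field_simps)
    also have "\<dots> \<le> lam_n p Q P n * (m ^ s / real n ^ s)"
      using lam_lower[OF p n] m0 unfolding m_def by (intro mult_right_mono) auto
    also have "\<dots> = b n" unfolding b_def m_def using npow[OF n] by simp
    finally show ?thesis .
  qed
  have bL: "b \<longlonglongrightarrow> L"
  proof (rule LIMSEQ_I)
    fix r :: real assume r: "r > 0"
    obtain N1 where N1: "\<And>n. n \<ge> N1 \<Longrightarrow> norm (l n - L) < r" using LIMSEQ_D[OF lL r] by blast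
    have Ks: "0 \<le> real K * real s" by simp
    define \<delta> where "\<delta> = r / (3 * (real K * s + 1))"
    have \<delta>0: "\<delta> > 0" unfolding \<delta>_def using r Ks by (intro divide_pos_pos mult_pos_pos) (auto intro: add_nonneg_pos)
    have "((\<lambda>T::real. T powr (1 - p)) \<longlongrightarrow> 0) at_top"
      using p by (intro tendsto_neg_powr filterlim_ident) auto
    then have "eventually (\<lambda>T::real. T powr (1 - p) < \<delta>) at_top"
      using \<delta>0 by (simp add: order_tendsto_iff)
    then obtain T0 where T0: "\<And>T. T \<ge> T0 \<Longrightarrow> T powr (1 - p) < \<delta>"
      unfolding eventually_at_top_linorder by blast
    define T where "T = max T0 1"
    have T: "T > 0" "T powr (1 - p) < \<delta>" using T0[of T] unfolding T_def by auto
    have KT: "real K * s * T powr (1 - p) < r / 3"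
    proof -
      have "real K * s * T powr (1 - p) \<le> (real K * s + 1) * T powr (1 - p)"
        by (intro mult_right_mono) auto
      also have "\<dots> < (real K * s + 1) * \<delta>" using T Ks by (intro mult_strict_left_mono) (auto intro: add_nonneg_pos)
      also have "\<dots> = r / 3"
      proof -
        have ne: "real K * real s + 1 \<noteq> 0" using Ks by linarith
        define z where "z = real K * real s + 1"
        have "z * (r / (3 * z)) = r / 3" using ne unfolding z_def[symmetric] by simp
        then show ?thesis unfolding \<delta>_def z_def by simp
      qed
      finally show ?thesis .
    qed
    have r3: "r / 3 > 0" using r by simp
    obtain N2 where N2: "\<And>k. k \<ge> N2 \<Longrightarrow> norm (a k - L) < r / 3" using LIMSEQ_D[OF aL r3] by blast
    define k0 where "k0 = max N2 s"
    define C0 where "C0 = (\<Sum>k<k0. real (ex_num Q P k))"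
    define \<beta> where "\<beta> = L + r / 3"
    have \<beta>0: "\<beta> \<ge> 0" unfolding \<beta>_def using L0 r by simp
    have C00: "C0 \<ge> 0" unfolding C0_def by (intro sum_nonneg) auto
    have exb: "real (ex_num Q P k) \<le> \<beta> * real (k choose s) + C0" for k
    proof (cases "k < k0")
      case True
      then have "real (ex_num Q P k) \<le> C0" unfolding C0_def
        by (intro member_le_sum) auto
      then show ?thesis using \<beta>0 by (simp add: add_increasing)
    next
      case False
      then have C: "real (k choose s) > 0" and kN: "k \<ge> N2" unfolding k0_def by auto
      have "\<bar>a k - L\<bar> < r / 3" using N2[OF kN] by simp
      then have "a k \<le> \<beta>" unfolding \<beta>_def by linarith
      then have "real (ex_num Q P k) \<le> \<beta> * real (k choose s)"
        unfolding a_def using C by (simp add: divide_simps)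
      then show ?thesis using C00 by simp
    qed
    define D where "D = fact s * C0 * T ^ s"
    have "(\<lambda>n. D / real n ^ s) \<longlonglongrightarrow> 0"
      by (intro tendsto_divide_0[OF tendsto_const] filterlim_at_top_imp_at_infinity
            filterlim_pow_at_top filterlim_real_sequentially s_pos)
    then obtain N3 where N3: "\<And>n. n \<ge> N3 \<Longrightarrow> norm (D / real n ^ s - 0) < r / 3"
      using LIMSEQ_D[OF _ r3] by blast
    show "\<exists>no. \<forall>n\<ge>no. norm (b n - L) < r"
    proof (intro exI allI impI)
      fix n assume n: "n \<ge> max (max N1 N3) 1"
      then have n0: "n > 0" by simp
      define m where "m = real n powr (1/p)"
      have m0: "m > 0" using n0 m_def by simp
      have "b n = lam_n p Q P n * (m ^ s / real n ^ s)" unfolding b_def m_def using npow[OF n0] by simp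
      also have "\<dots> \<le> ((\<beta> + real K * s * T powr (1 - p)) * (real n / m) ^ s + fact s * C0 * (T / m) ^ s) * (m ^ s / real n ^ s)"
        using lam_upper(1)[OF p \<beta>0 T(1) exb n0] m0 unfolding m_def by (intro mult_right_mono) auto
      also have "\<dots> = (\<beta> + real K * s * T powr (1 - p)) + D / real n ^ s"
        using m0 n0 unfolding D_def by (simp add: field_simps)
      also have "\<dots> < L + r"
      proof -
        have "\<bar>D / real n ^ s\<bar> < r / 3" using N3[of n] n by simp
        then show ?thesis using KT unfolding \<beta>_def by linarith
      qed
      finally have up: "b n < L + r" .
      have "l n > L - r" using N1[of n] n by auto
      then have "b n > L - r" using lb[OF n0] by simp
      then show "norm (b n - L) < r" using up by simp
    qed
  qed
  have "lam_prop p Q P = lim b" unfolding lam_prop_def b_def sQ by simp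
  also have "\<dots> = L" using bL by (rule limI)
  finally show ?thesis using pd by simp
qed

end

theorem theorem3p3:
  fixes r s :: nat and Q :: hgraph and P :: "hgraph set" and p :: real
  assumes "2 \<le> r" and "r \<le> s"
    and "rgraph r Q" and "card (verts Q) = s"
    and "hereditary r P" and "P \<noteq> {}"
    and "p > 1"
  shows "lam_prop p Q P = pi_dens Q P"
proof -
  interpret setting r s Q P by unfold_locales (use assms in auto)
  show ?thesis using main assms(7) by blast
qed

end
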